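(* Let $G$ be a finite group acting linearly on a finite-dimensional complex vector space $V$, with $\sigma:V\to\mathbb{C}^n$ as below. Let $I\subseteq\mathbb{R}$ be an interval and $c:I\to V/\!\!/G=\sigma(V)\subseteq\mathbb{C}^n$ continuous. Then there exists a continuous $\bar c:I\to V$ with $\sigma\circ\bar c=c$.
   Context: $\sigma=(\sigma_1,\dots,\sigma_n)$ where $\sigma_1,\dots,\sigma_n$ are homogeneous generators of the algebra $\mathbb{C}[V]^G$ of $G$-invariant polynomials; the quotient $V/\!\!/G$ is identified with $\sigma(V)\subseteq\mathbb{C}^n$. (For finite $G$ all orbits are closed, so a lift of $c$ is just a curve $\bar c$ with $\sigma\circ\bar c=c$.) *)

theory Defs
  imports "HOL-Analysis.Analysis" "HOL-Algebra.Group"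
begin

definition monomial_fun :: "('i::finite \<Rightarrow> nat) \<Rightarrow> complex^'i \<Rightarrow> complex" where
  "monomial_fun \<alpha> x = (\<Prod>i\<in>UNIV. (x $ i) ^ (\<alpha> i))"

definition poly_fun :: "(complex^'i::finite \<Rightarrow> complex) \<Rightarrow> bool" where
  "poly_fun f \<longleftrightarrow> (\<exists>A c. finite A \<and> f = (\<lambda>x. \<Sum>\<alpha>\<in>A. c \<alpha> * monomial_fun \<alpha> x))"

definition homog_poly_fun :: "nat \<Rightarrow> (complex^'i::finite \<Rightarrow> complex) \<Rightarrow> bool" where
  "homog_poly_fun k f \<longleftrightarrow>
     (\<exists>c. f = (\<lambda>x. \<Sum>\<alpha>\<in>{\<alpha>::'i\<Rightarrow>nat. (\<Sum>i\<in>UNIV. \<alpha> i) = k}. c \<alpha> * monomial_fun \<alpha> x))"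

definition linear_action :: "('g, 'b) monoid_scheme \<Rightarrow> ('g \<Rightarrow> complex^'d^'d) \<Rightarrow> bool" where
  "linear_action Gr \<rho> \<longleftrightarrow> group Gr \<and> \<rho> \<one>\<^bsub>Gr\<^esub> = mat 1 \<and>
     (\<forall>g\<in>carrier Gr. \<forall>h\<in>carrier Gr. \<rho> (g \<otimes>\<^bsub>Gr\<^esub> h) = \<rho> g ** \<rho> h)"

definition invariant_poly :: "('g, 'b) monoid_scheme \<Rightarrow> ('g \<Rightarrow> complex^'d^'d)
    \<Rightarrow> (complex^'d::finite \<Rightarrow> complex) \<Rightarrow> bool" where
  "invariant_poly Gr \<rho> f \<longleftrightarrow> poly_fun f \<and> (\<forall>g\<in>carrier Gr. \<forall>x. f (\<rho> g *v x) = f x)"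

definition hom_generators :: "('g, 'b) monoid_scheme \<Rightarrow> ('g \<Rightarrow> complex^'d^'d)
    \<Rightarrow> (complex^'d::finite \<Rightarrow> complex^'n::finite) \<Rightarrow> bool" where
  "hom_generators Gr \<rho> \<sigma> \<longleftrightarrow>
     (\<forall>j. invariant_poly Gr \<rho> (\<lambda>x. \<sigma> x $ j) \<and> (\<exists>k. homog_poly_fun k (\<lambda>x. \<sigma> x $ j))) \<and>
     (\<forall>f. invariant_poly Gr \<rho> f \<longrightarrow> (\<exists>P::complex^'n \<Rightarrow> complex. poly_fun P \<and> f = P \<circ> \<sigma>))"

end

theory Submission
  imports Defs
begin



lemma mv_blin: "bounded_linear (\<lambda>x::complex^'d::finite. (A::complex^'d^'e::finite) *v x)"
proof -
  have "linear (\<lambda>x::complex^'d::finite. (A::complex^'d^'e::finite) *v x)"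
    apply (rule linearI)
    apply (simp add: matrix_vector_right_distrib)
    apply (simp add: vec_eq_iff matrix_vector_mult_def scaleR_sum_right)
    done
  then show ?thesis using linear_conv_bounded_linear by blast
qed

lemma mono_add: "monomial_fun (\<lambda>i. \<alpha> i + \<beta> i) x = monomial_fun \<alpha> x * monomial_fun \<beta> x"
  by (simp add: monomial_fun_def power_add prod.distrib)

lemma mono_zero: "monomial_fun (\<lambda>_. 0) x = 1"
  by (simp add: monomial_fun_def)

lemma poly_fun_cmono: "poly_fun (\<lambda>x. c * monomial_fun \<alpha> x)"
  unfolding poly_fun_def by (rule exI[of _ "{\<alpha>}"], rule exI[of _ "\<lambda>_. c"]) simp

lemma poly_fun_const: "poly_fun (\<lambda>x. c)"
  using poly_fun_cmono[of c "\<lambda>_. 0"] by (simp add: mono_zero)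

lemma poly_fun_add:
  assumes "poly_fun f" "poly_fun g" shows "poly_fun (\<lambda>x. f x + g x)"
proof -
  obtain A c where A: "finite A" "f = (\<lambda>x. \<Sum>\<alpha>\<in>A. c \<alpha> * monomial_fun \<alpha> x)"
    using assms(1) unfolding poly_fun_def by blast
  obtain B d where B: "finite B" "g = (\<lambda>x. \<Sum>\<alpha>\<in>B. d \<alpha> * monomial_fun \<alpha> x)"
    using assms(2) unfolding poly_fun_def by blast
  let ?e = "\<lambda>\<alpha>. (if \<alpha> \<in> A then c \<alpha> else 0) + (if \<alpha> \<in> B then d \<alpha> else 0)"
  have "(\<lambda>x. f x + g x) = (\<lambda>x. \<Sum>\<alpha>\<in>A \<union> B. ?e \<alpha> * monomial_fun \<alpha> x)"
  proof
    fix x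
    have 1: "(\<Sum>\<alpha>\<in>A. c \<alpha> * monomial_fun \<alpha> x) = (\<Sum>\<alpha>\<in>A \<union> B. (if \<alpha> \<in> A then c \<alpha> else 0) * monomial_fun \<alpha> x)"
      by (rule sum.mono_neutral_cong_left) (use A B in auto)
    have 2: "(\<Sum>\<alpha>\<in>B. d \<alpha> * monomial_fun \<alpha> x) = (\<Sum>\<alpha>\<in>A \<union> B. (if \<alpha> \<in> B then d \<alpha> else 0) * monomial_fun \<alpha> x)"
      by (rule sum.mono_neutral_cong_left) (use A B in auto)
    show "f x + g x = (\<Sum>\<alpha>\<in>A \<union> B. ?e \<alpha> * monomial_fun \<alpha> x)"
      unfolding A B 1 2 sum.distrib[symmetric] distrib_right by (rule refl)
  qed
  then show ?thesis unfolding poly_fun_def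
    by (intro exI[of _ "A \<union> B"] exI[of _ ?e]) (use A B in simp)
qed

lemma poly_fun_sum:
  assumes "finite S" "\<And>i. i \<in> S \<Longrightarrow> poly_fun (f i)"
  shows "poly_fun (\<lambda>x. \<Sum>i\<in>S. f i x)"
  using assms
proof (induction S rule: finite_induct)
  case empty then show ?case using poly_fun_const[of 0] by simp
next
  case (insert a S)
  then show ?case by (simp add: poly_fun_add)
qed

lemma poly_fun_mult:
  assumes "poly_fun f" "poly_fun g" shows "poly_fun (\<lambda>x. f x * g x)"
proof -
  obtain A c where A: "finite A" "f = (\<lambda>x. \<Sum>\<alpha>\<in>A. c \<alpha> * monomial_fun \<alpha> x)"
    using assms(1) unfolding poly_fun_def by blast
  obtain B d where B: "finite B" "g = (\<lambda>x. \<Sum>\<alpha>\<in>B. d \<alpha> * monomial_fun \<alpha> x)"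
    using assms(2) unfolding poly_fun_def by blast
  have eq: "(\<lambda>x. f x * g x) = (\<lambda>x. \<Sum>\<alpha>\<in>A. \<Sum>\<beta>\<in>B. (c \<alpha> * d \<beta>) * monomial_fun (\<lambda>i. \<alpha> i + \<beta> i) x)"
    unfolding A B sum_product by (simp add: mono_add mult_ac)
  show ?thesis unfolding eq
    by (intro poly_fun_sum A B poly_fun_cmono)
qed

lemma poly_fun_prod:
  assumes "finite S" "\<And>i. i \<in> S \<Longrightarrow> poly_fun (f i)"
  shows "poly_fun (\<lambda>x. \<Prod>i\<in>S. f i x)"
  using assms
proof (induction S rule: finite_induct)
  case empty then show ?case using poly_fun_const[of 1] by simp
next
  case (insert a S)
  then show ?case by (simp add: poly_fun_mult)
qed

lemma poly_fun_power: "poly_fun f \<Longrightarrow> poly_fun (\<lambda>x. f x ^ n)"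
  using poly_fun_prod[of "{..<n}" "\<lambda>_. f"] by simp

lemma poly_fun_cmult: "poly_fun f \<Longrightarrow> poly_fun (\<lambda>x. c * f x)"
  using poly_fun_mult[OF poly_fun_const] by blast

lemma poly_fun_diff:
  assumes "poly_fun f" "poly_fun g" shows "poly_fun (\<lambda>x. f x - g x)"
  using poly_fun_add[OF assms(1) poly_fun_cmult[OF assms(2), of "-1"]] by simp

lemma poly_fun_coord: "poly_fun (\<lambda>x. x $ i)"
proof -
  have "(\<lambda>x. x $ i) = (\<lambda>x. 1 * monomial_fun (\<lambda>j. if j = i then 1 else 0) x)"
    by (auto simp: monomial_fun_def if_distrib[of "power _"] prod.delta cong: if_cong)
  then show ?thesis using poly_fun_cmono by metis
qed

lemma poly_fun_lin: "poly_fun (\<lambda>x. (N *v x) $ i)"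
  unfolding matrix_vector_mult_def
  by (simp, intro poly_fun_sum poly_fun_mult poly_fun_const poly_fun_coord) auto

lemma poly_fun_comp:
  assumes "poly_fun P" shows "poly_fun (\<lambda>x. P (N *v x))"
proof -
  obtain A c where A: "finite A" "P = (\<lambda>x. \<Sum>\<alpha>\<in>A. c \<alpha> * monomial_fun \<alpha> x)"
    using assms unfolding poly_fun_def by blast
  show ?thesis unfolding A monomial_fun_def
    by (intro poly_fun_sum A poly_fun_cmult poly_fun_prod poly_fun_power poly_fun_lin) auto
qed

lemma poly_fun_cont: "poly_fun f \<Longrightarrow> continuous_on UNIV f"
  unfolding poly_fun_def monomial_fun_def
  by (auto intro!: continuous_intros)

lemma homog_scale:
  fixes r :: real and x :: "complex^'i::finite"
  assumes "homog_poly_fun k f" shows "f (scaleR r x) = of_real r ^ k * f x"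
proof -
  obtain c where c: "f = (\<lambda>x. \<Sum>\<alpha>\<in>{\<alpha>. (\<Sum>i\<in>UNIV. \<alpha> i) = k}. c \<alpha> * monomial_fun \<alpha> x)"
    using assms unfolding homog_poly_fun_def by blast
  have comp: "(scaleR r x) $ i = of_real r * x $ i" for i
    by (subst vector_scaleR_component) (rule scaleR_conv_of_real)
  have m: "monomial_fun \<alpha> (scaleR r x) = of_real r ^ (\<Sum>i\<in>UNIV. \<alpha> i) * monomial_fun \<alpha> x" for \<alpha>
    by (simp only: monomial_fun_def comp power_mult_distrib prod.distrib power_sum)
  show ?thesis unfolding c by (simp add: m sum_distrib_left mult_ac)
qed




lemma la_group: "linear_action Gr \<rho> \<Longrightarrow> group Gr"
  by (simp add: linear_action_def)

lemma la_mult: "linear_action Gr \<rho> \<Longrightarrow> g \<in> carrier Gr \<Longrightarrow> h \<in> carrier Gr \<Longrightarrow>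
   \<rho> (g \<otimes>\<^bsub>Gr\<^esub> h) *v v = \<rho> g *v (\<rho> h *v v)"
  by (simp add: linear_action_def matrix_vector_mul_assoc)

lemma la_one: "linear_action Gr \<rho> \<Longrightarrow> \<rho> \<one>\<^bsub>Gr\<^esub> *v v = v"
  by (simp add: linear_action_def)

lemma la_inv: "linear_action Gr \<rho> \<Longrightarrow> g \<in> carrier Gr \<Longrightarrow>
   \<rho> (inv\<^bsub>Gr\<^esub> g) *v (\<rho> g *v v) = v"
  by (metis la_mult la_one la_group group.inv_closed group.l_inv)

lemma la_bij: "linear_action Gr \<rho> \<Longrightarrow> h \<in> carrier Gr \<Longrightarrow>
   bij_betw (\<lambda>g. g \<otimes>\<^bsub>Gr\<^esub> h) (carrier Gr) (carrier Gr)"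
  apply (drule la_group)
  apply (rule bij_betw_byWitness[where f'="\<lambda>g. g \<otimes>\<^bsub>Gr\<^esub> inv\<^bsub>Gr\<^esub> h"])
  apply (auto simp: group.inv_closed monoid.m_closed group.is_monoid monoid.m_assoc group.r_inv group.l_inv monoid.r_one)
  done

lemma sigma_inv:
  assumes "hom_generators Gr \<rho> \<sigma>" "g \<in> carrier Gr"
  shows "\<sigma> (\<rho> g *v v) = \<sigma> v"
  using assms unfolding hom_generators_def invariant_poly_def by (simp add: vec_eq_iff)

lemma separation:
  fixes x y :: "complex^'d::finite" and \<sigma> :: "complex^'d \<Rightarrow> complex^'n::finite"
  assumes la: "linear_action Gr \<rho>" and fin: "finite (carrier Gr)"
    and hg: "hom_generators Gr \<rho> \<sigma>" and eq: "\<sigma> x = \<sigma> y"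
  shows "\<exists>g\<in>carrier Gr. x = \<rho> g *v y"
proof (rule ccontr)
  assume nx: "\<not> ?thesis"
  have grp: "group Gr" using la la_group by blast
  define Ox where "Ox = (\<lambda>g. \<rho> g *v x) ` carrier Gr"
  define Oy where "Oy = (\<lambda>g. \<rho> g *v y) ` carrier Gr"
  have fOx: "finite Ox" and fOy: "finite Oy" using fin by (auto simp: Ox_def Oy_def)
  have disj: "a \<noteq> b" if ab: "a \<in> Ox" "b \<in> Oy" for a b
  proof
    assume "a = b"
    then obtain g h where g: "g \<in> carrier Gr" "h \<in> carrier Gr" "\<rho> g *v x = \<rho> h *v y"
      using ab by (auto simp: Ox_def Oy_def)
    then have "x = \<rho> (inv\<^bsub>Gr\<^esub> g) *v (\<rho> h *v y)" using la_inv[OF la g(1)] by metis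
    also have "\<dots> = \<rho> (inv\<^bsub>Gr\<^esub> g \<otimes>\<^bsub>Gr\<^esub> h) *v y"
      using la_mult[OF la] g grp group.inv_closed by metis
    finally show False using nx g grp group.inv_closed monoid.m_closed group.is_monoid by metis
  qed
  define ix where "ix a b = (SOME i. a $ i \<noteq> b $ i)" for a b :: "complex^'d"
  have ix: "a $ ix a b \<noteq> b $ ix a b" if "a \<in> Ox" "b \<in> Oy" for a b
    unfolding ix_def by (rule someI_ex) (use disj[OF that] in \<open>auto simp: vec_eq_iff\<close>)
  define qb where "qb b v = (\<Prod>a\<in>Ox. inverse (b $ ix a b - a $ ix a b) * (v $ ix a b - a $ ix a b))"
    for b v :: "complex^'d"
  define q where "q v = 1 - (\<Prod>b\<in>Oy. 1 - qb b v)" for v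
  define f where "f v = (\<Sum>g\<in>carrier Gr. q (\<rho> g *v v))" for v
  have qb1: "qb b b = 1" if "b \<in> Oy" for b
    unfolding qb_def
  proof (rule prod.neutral, intro ballI)
    fix a assume "a \<in> Ox"
    then have "b $ ix a b - a $ ix a b \<noteq> 0" using ix[OF _ that] by force
    then show "inverse (b $ ix a b - a $ ix a b) * (b $ ix a b - a $ ix a b) = 1" by simp
  qed
  have qb0: "qb b a = 0" if "a \<in> Ox" for a b
    unfolding qb_def using fOx that by (auto simp: prod_zero_iff)
  have qy: "q b = 1" if "b \<in> Oy" for b
    unfolding q_def using fOy that qb1 by (auto simp: prod_zero_iff)
  have qx: "q a = 0" if "a \<in> Ox" for a
    unfolding q_def using qb0[OF that] by simp
  have fy: "f y = of_nat (card (carrier Gr))"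
    unfolding f_def by (simp add: qy Oy_def)
  have fx: "f x = 0"
    unfolding f_def by (simp add: qx Ox_def)
  have nz: "card (carrier Gr) \<noteq> 0"
    using fin grp group.is_monoid monoid.one_closed by (metis card_0_eq empty_iff)
  have pq: "poly_fun q"
    unfolding q_def qb_def
    by (intro poly_fun_diff poly_fun_const poly_fun_prod fOx fOy poly_fun_cmult poly_fun_coord)
  have pf: "poly_fun f"
    unfolding f_def by (intro poly_fun_sum fin poly_fun_comp pq)
  have invf: "f (\<rho> h *v v) = f v" if "h \<in> carrier Gr" for h v
  proof -
    have "f (\<rho> h *v v) = (\<Sum>g\<in>carrier Gr. q (\<rho> (g \<otimes>\<^bsub>Gr\<^esub> h) *v v))"
      unfolding f_def by (rule sum.cong) (use la_mult[OF la _ that] in auto)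
    also have "\<dots> = f v"
      unfolding f_def using sum.reindex_bij_betw[OF la_bij[OF la that], of "\<lambda>g. q (\<rho> g *v v)"] .
    finally show ?thesis .
  qed
  have "invariant_poly Gr \<rho> f" unfolding invariant_poly_def using pf invf by blast
  then obtain P where "f = P \<circ> \<sigma>" using hg unfolding hom_generators_def by blast
  then have "f x = f y" using eq by simp
  then show False using fx fy nz by simp
qed




definition islift :: "(real \<Rightarrow> 'v::metric_space \<Rightarrow> bool) \<Rightarrow> real set \<Rightarrow> (real \<Rightarrow> 'v) \<Rightarrow> bool" where
  "islift R S f \<longleftrightarrow> continuous_on S f \<and> (\<forall>s\<in>S. R s (f s))"

lemma islift_subset: "islift R S f \<Longrightarrow> T \<subseteq> S \<Longrightarrow> islift R T f"
  unfolding islift_def using continuous_on_subset by blast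

lemma islift_glue:
  assumes f: "islift R {a..b} f" and g: "islift R {b..c} g" and eq: "f b = g b"
  shows "islift R {a..c} (\<lambda>s. if s \<le> b then f s else g s)"
  unfolding islift_def
proof
  have c1: "continuous_on {x\<in>{a..c}. x \<le> b} f"
    by (rule continuous_on_subset[of "{a..b}"]) (use f in \<open>auto simp: islift_def\<close>)
  have c2: "continuous_on {x\<in>{a..c}. b \<le> x} g"
    by (rule continuous_on_subset[of "{b..c}"]) (use g in \<open>auto simp: islift_def\<close>)
  show "continuous_on {a..c} (\<lambda>s. if s \<le> b then f s else g s)"
    using continuous_on_cases_le[OF c1 c2 continuous_on_id] eq by simp
  show "\<forall>s\<in>{a..c}. R s (if s \<le> b then f s else g s)"
    using f g unfolding islift_def by auto
qed

lemma islift_refl: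
  assumes "islift R (uminus ` S) f"
  shows "islift (\<lambda>s. R (-s)) S (\<lambda>s. f (-s))"
  unfolding islift_def
proof
  show "continuous_on S (\<lambda>s. f (- s))"
    by (rule continuous_on_compose2[of "uminus ` S" f]) (use assms in \<open>auto simp: islift_def intro: continuous_intros\<close>)
  show "\<forall>s\<in>S. R (- s) (f (- s))" using assms by (auto simp: islift_def)
qed

lemma islift_refl':
  assumes "islift (\<lambda>s. R (-s)) S f"
  shows "islift R (uminus ` S) (\<lambda>s. f (-s))"
proof -
  have "islift (\<lambda>s. R (-s)) (uminus ` (uminus ` S)) f" using assms by (simp add: image_image)
  from islift_refl[OF this] show ?thesis by simp
qed

locale liftctx =
  fixes R :: "real \<Rightarrow> 'v::metric_space \<Rightarrow> bool"
  assumes rebase: "\<And>S f p y. islift R S f \<Longrightarrow> p \<in> S \<Longrightarrow> R p y \<Longrightarrow> \<exists>g. islift R S g \<and> g p = y"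
begin

lemma seg_trans:
  assumes "\<exists>f. islift R {min x y..max x y} f" "\<exists>f. islift R {min y z..max y z} f"
  shows "\<exists>f. islift R {min x z..max x z} f"
proof -
  have gl: "\<exists>f. islift R {a..c} f" if abc: "a \<le> b" "b \<le> c" "\<exists>f. islift R {a..b} f" "\<exists>f. islift R {b..c} f"
    for a b c
  proof -
    obtain f where f: "islift R {a..b} f" using abc by blast
    obtain g where g: "islift R {b..c} g" using abc by blast
    have "R b (f b)" using f abc unfolding islift_def by auto
    then obtain g' where g': "islift R {b..c} g'" "g' b = f b"
      using rebase[OF g, of b] abc by auto
    show ?thesis using islift_glue[OF f g'(1)] g'(2) by metis
  qed
  show ?thesis
  proof (cases "min x z \<le> y \<and> y \<le> max x z")
    case True
    show ?thesis
    proof (cases "x \<le> z")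
      case xz: True
      then have e: "min x y = x" "max x y = y" "min y z = y" "max y z = z" "min x z = x" "max x z = z"
        using True by auto
      show ?thesis using gl[of x y z] assms True xz unfolding e by auto
    next
      case xz: False
      then have e: "min x y = y" "max x y = x" "min y z = z" "max y z = y" "min x z = z" "max x z = x"
        using True by auto
      show ?thesis using gl[of z y x] assms True xz unfolding e by auto
    qed
  next
    case False
    then have "{min x z..max x z} \<subseteq> {min x y..max x y} \<or> {min x z..max x z} \<subseteq> {min y z..max y z}"
      by (cases "x \<le> z"; cases "y \<le> x"; cases "y \<le> z") (auto simp: min_def max_def)
    then show ?thesis using assms islift_subset by blast
  qed
qed

lemma seg:
  assumes K: "is_interval K"
    and loc: "\<And>s. s \<in> K \<Longrightarrow> \<exists>d>0. \<exists>f. islift R (K \<inter> ball s d) f"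
    and xy: "x \<in> K" "y \<in> K"
  shows "\<exists>f. islift R {min x y..max x y} f"
proof -
  let ?Q = "\<lambda>a b. \<exists>f. islift R {min a b..max a b} f"
  have conn: "connected K" using K is_interval_connected by blast
  have sym: "\<And>a b. \<lbrakk>?Q a b; a \<in> K; b \<in> K\<rbrakk> \<Longrightarrow> ?Q b a"
    by (simp add: min.commute max.commute)
  have trans: "\<And>a b c. \<lbrakk>?Q a b; ?Q b c; a \<in> K; b \<in> K; c \<in> K\<rbrakk> \<Longrightarrow> ?Q a c"
    using seg_trans by blast
  have opI: "\<exists>T. openin (top_of_set K) T \<and> a \<in> T \<and> (\<forall>x\<in>T. ?Q a x)" if a: "a \<in> K" for a
  proof -
    obtain d f where d: "d > 0" "islift R (K \<inter> ball a d) f" using loc[OF a] by blast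
    have "?Q a x" if x: "x \<in> K \<inter> ball a d" for x
    proof -
      have "{min a x..max a x} \<subseteq> K \<inter> ball a d"
      proof
        fix s assume s: "s \<in> {min a x..max a x}"
        have m1: "min a x \<in> K" "max a x \<in> K" using a x by (simp_all add: min_def max_def)
        have "s \<in> K" using K[unfolded is_interval_1] m1 s by (meson atLeastAtMost_iff)
        moreover have "dist a s < d"
        proof (cases "a \<le> x")
          case True then show ?thesis using x s by (simp add: dist_real_def)
        next
          case False then show ?thesis using x s by (simp add: dist_real_def)
        qed
        ultimately show "s \<in> K \<inter> ball a d" by simp
      qed
      then show ?thesis using d islift_subset by blast
    qed
    moreover have "openin (top_of_set K) (K \<inter> ball a d)" by (rule openin_open_Int) simp
    moreover have "a \<in> K \<inter> ball a d" using a d by simp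
    ultimately show ?thesis by blast
  qed
  show ?thesis by (rule connected_equivalence_relation[OF conn xy sym trans opI])
qed

lemma ext:
  assumes K: "is_interval K"
    and loc: "\<And>s. s \<in> K \<Longrightarrow> \<exists>d>0. \<exists>f. islift R (K \<inter> ball s d) f"
    and f: "islift R {a..b} f" and abc: "a \<le> b" "b \<le> c" "b \<in> K" "c \<in> K"
  shows "\<exists>g. islift R {a..c} g \<and> (\<forall>s\<in>{a..b}. g s = f s)"
proof -
  obtain h where h: "islift R {b..c} h" using seg[OF K loc abc(3,4)] abc by auto
  have "R b (f b)" using f abc unfolding islift_def by auto
  then obtain h' where h': "islift R {b..c} h'" "h' b = f b"
    using rebase[OF h, of b] abc by auto
  show ?thesis
    by (rule exI[of _ "\<lambda>s. if s \<le> b then f s else h' s"])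
       (use islift_glue[OF f h'(1)] h'(2) in auto)
qed

lemma seqlift:
  assumes K: "is_interval K"
    and loc: "\<And>s. s \<in> K \<Longrightarrow> \<exists>d>0. \<exists>f. islift R (K \<inter> ball s d) f"
    and t0: "t0 \<in> K"
    and b0: "b 0 = t0" and bmono: "incseq b" and bK: "\<And>n. b n \<in> K"
    and bex: "\<And>s. s \<in> K \<Longrightarrow> t0 \<le> s \<Longrightarrow> \<exists>n. s < b n"
  shows "\<exists>f. islift R {s\<in>K. t0 \<le> s} f"
proof -
  obtain f0 where f0: "islift R {t0..b 0} f0" using seg[OF K loc t0 t0] b0 by auto
  define L where "L = rec_nat f0 (\<lambda>n f. SOME g. islift R {t0..b (Suc n)} g \<and> (\<forall>s\<in>{t0..b n}. g s = f s))"
  have L0: "L 0 = f0" by (simp add: L_def)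
  have LS: "L (Suc n) = (SOME g. islift R {t0..b (Suc n)} g \<and> (\<forall>s\<in>{t0..b n}. g s = L n s))" for n
    by (simp add: L_def)
  have Lok: "islift R {t0..b n} (L n) \<and> (\<forall>s\<in>{t0..b n}. L (Suc n) s = L n s) \<and> islift R {t0..b (Suc n)} (L (Suc n))" for n
  proof (induction n)
    case 0
    have "\<exists>g. islift R {t0..b (Suc 0)} g \<and> (\<forall>s\<in>{t0..b 0}. g s = L 0 s)"
      using ext[OF K loc, of t0 "b 0" "L 0" "b (Suc 0)"] f0 L0 b0 bK bmono
      by (auto simp: incseq_Suc_iff)
    from someI_ex[OF this] show ?case using f0 L0 LS by simp
  next
    case (Suc n)
    have "\<exists>g. islift R {t0..b (Suc (Suc n))} g \<and> (\<forall>s\<in>{t0..b (Suc n)}. g s = L (Suc n) s)"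
      using ext[OF K loc, of t0 "b (Suc n)" "L (Suc n)" "b (Suc (Suc n))"] Suc.IH bK bmono b0
      by (metis incseq_Suc_iff incseq_def zero_le)
    from someI_ex[OF this] show ?case using Suc.IH LS by simp
  qed
  have coh: "L n s = L m s" if "m \<le> n" "s \<in> {t0..b m}" for m n s
    using that
  proof (induction n rule: dec_induct)
    case base then show ?case by simp
  next
    case (step k)
    have "s \<in> {t0..b k}" using step.prems step.hyps(1) bmono by (auto simp: incseq_def intro: order_trans)
    then show ?case using Lok[of k] step.IH step.prems by simp
  qed
  define N where "N s = (SOME n. s < b n)" for s
  have N: "s < b (N s)" if "s \<in> K" "t0 \<le> s" for s
    unfolding N_def using bex[OF that] by (rule someI_ex)
  define cb where "cb s = L (N s) s" for s
  have cbL: "cb s = L n s" if "s \<in> K" "t0 \<le> s" "s \<le> b n" for s n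
  proof (cases "N s \<le> n")
    case True then show ?thesis unfolding cb_def using coh[of "N s" n s] N[OF that(1,2)] that by simp
  next
    case False then show ?thesis unfolding cb_def using coh[of n "N s" s] that by simp
  qed
  show ?thesis
  proof (rule exI[of _ cb], unfold islift_def, intro conjI ballI)
    fix s assume s: "s \<in> {s \<in> K. t0 \<le> s}"
    then have "s \<le> b (N s)" using N by force
    then show "R s (cb s)" using Lok[of "N s"] s cbL[of s "N s"] unfolding islift_def by auto
  next
    show "continuous_on {s \<in> K. t0 \<le> s} cb"
      unfolding continuous_on_iff
    proof (intro ballI allI impI)
      fix s e assume s: "s \<in> {s \<in> K. t0 \<le> s}" and e: "(0::real) < e"
      let ?n = "N s"
      have sn: "s < b ?n" using N s by force
      have cont: "continuous_on {t0..b ?n} (L ?n)" using Lok[of ?n] unfolding islift_def by blast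
      have sin: "s \<in> {t0..b ?n}" using s sn by auto
      obtain d where d: "d > 0" "\<forall>x'\<in>{t0..b ?n}. dist x' s < d \<longrightarrow> dist (L ?n x') (L ?n s) < e"
        using cont[unfolded continuous_on_iff, rule_format, OF sin e] by blast
      show "\<exists>d>0. \<forall>x'\<in>{s \<in> K. t0 \<le> s}. dist x' s < d \<longrightarrow> dist (cb x') (cb s) < e"
      proof (intro exI[of _ "min d (b ?n - s)"] conjI ballI impI)
        show "0 < min d (b ?n - s)" using d sn by simp
        fix x' assume x': "x' \<in> {s \<in> K. t0 \<le> s}" "dist x' s < min d (b ?n - s)"
        then have "x' \<le> b ?n" by (auto simp: dist_real_def)
        then show "dist (cb x') (cb s) < e"
          using d x' s sn cbL[of x' ?n] cbL[of s ?n] by auto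
      qed
    qed
  qed
qed


lemma half:
  assumes K: "is_interval K"
    and loc: "\<And>s. s \<in> K \<Longrightarrow> \<exists>d>0. \<exists>f. islift R (K \<inter> ball s d) f"
    and t0: "t0 \<in> K"
  shows "\<exists>f. islift R {s\<in>K. t0 \<le> s} f"
proof -
  let ?P = "{s\<in>K. t0 \<le> s}"
  have intv: "y \<in> K" if "a \<in> K" "b \<in> K" "a \<le> y" "y \<le> b" for a b y
    using K[unfolded is_interval_1] that by (meson)
  show ?thesis
  proof (cases "\<exists>m\<in>?P. \<forall>s\<in>?P. s \<le> m")
    case True
    then obtain m where m: "m \<in> ?P" "\<forall>s\<in>?P. s \<le> m" by blast
    have tm: "t0 \<le> m" using m by simp
    have "?P = {min t0 m..max t0 m}"
    proof (intro equalityI subsetI)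
      fix x assume "x \<in> ?P" then show "x \<in> {min t0 m..max t0 m}" using m tm by auto
    next
      fix x assume "x \<in> {min t0 m..max t0 m}"
      then have "t0 \<le> x" "x \<le> m" using tm by auto
      then show "x \<in> ?P" using intv[of t0 m x] m t0 by auto
    qed
    moreover have "m \<in> K" using m by simp
    ultimately show ?thesis using seg[OF K loc t0] by metis
  next
    case nomax: False
    have nm: "\<exists>s'\<in>?P. s < s'" if "s \<in> ?P" for s
      using nomax that by (auto simp: not_le)
    show ?thesis
    proof (cases "bdd_above ?P")
      case True
      define \<beta> where "\<beta> = Sup ?P"
      have ne: "?P \<noteq> {}" using t0 by auto
      have lt: "s < \<beta>" if sP: "s \<in> ?P" for s
      proof -
        obtain s' where "s' \<in> ?P" "s < s'" using nm[OF sP] by blast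
        then show ?thesis unfolding \<beta>_def using cSup_upper[OF _ True] by fastforce
      qed
      have t0b: "t0 < \<beta>" using lt t0 by auto
      have inP: "y \<in> K" if yy: "t0 \<le> y" "y < \<beta>" for y
      proof -
        obtain s where "s \<in> ?P" "y < s" using less_cSup_iff[OF ne True] yy unfolding \<beta>_def by blast
        then show ?thesis using intv[of t0 s y] t0 yy by auto
      qed
      define b where "b n = \<beta> - (\<beta> - t0) / real (Suc n)" for n
      have b0: "b 0 = t0" by (simp add: b_def)
      have bge: "t0 \<le> b n" for n
      proof -
        have "(\<beta> - t0) / real (Suc n) \<le> \<beta> - t0" using t0b by (simp add: divide_le_eq)
        then show ?thesis by (simp add: b_def)
      qed
      have blt: "b n < \<beta>" for n using t0b by (simp add: b_def)
      have bmono: "incseq b"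
        unfolding incseq_def b_def using t0b by (auto intro!: divide_left_mono mult_pos_pos)
      have bK: "b n \<in> K" for n using inP bge blt by blast
      have bex: "\<exists>n. s < b n" if "s \<in> K" "t0 \<le> s" for s
      proof -
        have "s < \<beta>" using lt that by auto
        then have "0 < (\<beta> - s) / (\<beta> - t0)" using t0b by simp
        then obtain n where n: "inverse (real (Suc n)) < (\<beta> - s) / (\<beta> - t0)"
          using reals_Archimedean by blast
        then have "(\<beta> - t0) / real (Suc n) < \<beta> - s"
          using t0b by (simp add: field_simps)
        then have "s < b n" by (simp add: b_def)
        then show ?thesis by blast
      qed
      show ?thesis by (rule seqlift[OF K loc t0 b0 bmono bK bex])
    next
      case False
      define b where "b n = t0 + real n" for n
      have b0: "b 0 = t0" by (simp add: b_def)
      have bmono: "incseq b" unfolding incseq_def b_def by simp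
      have bK: "b n \<in> K" for n
      proof -
        obtain s where "s \<in> ?P" "b n < s" using False unfolding bdd_above_def by (meson not_le)
        then show ?thesis using intv[of t0 s "b n"] t0 by (auto simp: b_def)
      qed
      have bex: "\<exists>n. s < b n" if "s \<in> K" "t0 \<le> s" for s
      proof -
        obtain n where "s - t0 < real n" using reals_Archimedean2 by blast
        then have "s < b n" by (simp add: b_def)
        then show ?thesis by blast
      qed
      show ?thesis by (rule seqlift[OF K loc t0 b0 bmono bK bex])
    qed
  qed
qed

end

lemma liftctx_refl: "liftctx R \<Longrightarrow> liftctx (\<lambda>s. R (-s))"
  unfolding liftctx_def
proof (intro allI impI)
  fix S f p y
  assume reb: "\<forall>S f p y. islift R S f \<longrightarrow> p \<in> S \<longrightarrow> R p y \<longrightarrow> (\<exists>g. islift R S g \<and> g p = y)"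
    and f: "islift (\<lambda>s. R (- s)) S f" and p: "p \<in> S" and y: "R (- p) y"
  have "islift R (uminus ` S) (\<lambda>s. f (-s))" using islift_refl'[OF f] .
  then obtain g where g: "islift R (uminus ` S) g" "g (-p) = y" using reb p y by blast
  show "\<exists>g. islift (\<lambda>s. R (- s)) S g \<and> g p = y"
    using islift_refl[OF g(1)] g(2) by auto
qed

lemma global_lift:
  assumes ctx: "liftctx R" and K: "is_interval K"
    and loc: "\<And>s. s \<in> K \<Longrightarrow> \<exists>d>0. \<exists>f. islift R (K \<inter> ball s d) f"
  shows "\<exists>f. islift R K f"
proof (cases "K = {}")
  case True then show ?thesis by (auto simp: islift_def)
next
  case False
  then obtain t0 where t0: "t0 \<in> K" by blast
  obtain f where f: "islift R {s\<in>K. t0 \<le> s} f" using liftctx.half[OF ctx K loc t0] by blast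
  have ctx': "liftctx (\<lambda>s. R (-s))" using liftctx_refl[OF ctx] .
  have K': "is_interval (uminus ` K)" using K by simp
  have loc': "\<exists>d>0. \<exists>f. islift (\<lambda>s. R (-s)) (uminus ` K \<inter> ball s d) f" if s: "s \<in> uminus ` K" for s
  proof -
    have "-s \<in> K" using s by auto
    then obtain d g where d: "d > 0" "islift R (K \<inter> ball (-s) d) g" using loc by blast
    have "uminus ` (uminus ` K \<inter> ball s d) = K \<inter> ball (-s) d"
    proof (intro equalityI subsetI)
      fix x assume "x \<in> uminus ` (uminus ` K \<inter> ball s d)"
      then show "x \<in> K \<inter> ball (-s) d" by (auto simp: dist_real_def)
    next
      fix x assume "x \<in> K \<inter> ball (-s) d"
      then show "x \<in> uminus ` (uminus ` K \<inter> ball s d)"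
        by (intro image_eqI[of _ _ "-x"]) (auto simp: dist_real_def)
    qed
    then have "islift R (uminus ` (uminus ` K \<inter> ball s d)) g" using d by simp
    then show ?thesis using d islift_refl by blast
  qed
  obtain g where g: "islift (\<lambda>s. R (-s)) {s\<in>uminus ` K. -t0 \<le> s} g"
    using liftctx.half[OF ctx' K' loc'] t0 by blast
  have eqs: "uminus ` {s\<in>uminus ` K. -t0 \<le> s} = {s\<in>K. s \<le> t0}"
  proof (intro equalityI subsetI)
    fix x assume "x \<in> uminus ` {s\<in>uminus ` K. -t0 \<le> s}"
    then show "x \<in> {s\<in>K. s \<le> t0}" by auto
  next
    fix x assume "x \<in> {s\<in>K. s \<le> t0}"
    then show "x \<in> uminus ` {s\<in>uminus ` K. -t0 \<le> s}"
      by (intro image_eqI[of _ _ "-x"]) auto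
  qed
  have g': "islift R {s\<in>K. s \<le> t0} (\<lambda>s. g (-s))" using islift_refl'[OF g] eqs by simp
  have "R t0 (f t0)" using f t0 by (auto simp: islift_def)
  then obtain h where h: "islift R {s\<in>K. s \<le> t0} h" "h t0 = f t0"
    using liftctx.rebase[OF ctx g', of t0] t0 by auto
  have c: "continuous_on K (\<lambda>s. if s \<le> t0 then h s else f s)"
    by (rule continuous_on_cases_le[where h="\<lambda>s. s"]) (use f h in \<open>auto simp: islift_def intro: continuous_on_id\<close>)
  show ?thesis
    by (rule exI[of _ "\<lambda>s. if s \<le> t0 then h s else f s"]) (use c f h in \<open>auto simp: islift_def\<close>)
qed




definition mgrp :: "(complex^'d::finite^'d) set \<Rightarrow> bool" where
  "mgrp M \<longleftrightarrow> finite M \<and> mat 1 \<in> M \<and> (\<forall>A\<in>M. \<forall>B\<in>M. A ** B \<in> M) \<and> (\<forall>A\<in>M. \<exists>B\<in>M. B ** A = mat 1)"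

definition ocont :: "(complex^'d::finite^'d) set \<Rightarrow> real set \<Rightarrow> (real \<Rightarrow> complex^'d) \<Rightarrow> bool" where
  "ocont M J F \<longleftrightarrow> (\<forall>t\<in>J. \<forall>e>0. \<exists>d>0. \<forall>s\<in>J. dist s t < d \<longrightarrow> (\<exists>A\<in>M. dist (A *v F s) (F t) < e))"

definition orel :: "(complex^'d::finite^'d) set \<Rightarrow> (real \<Rightarrow> complex^'d) \<Rightarrow> real \<Rightarrow> complex^'d \<Rightarrow> bool" where
  "orel M F s y \<longleftrightarrow> (\<exists>A\<in>M. y = A *v F s)"

lemma mgrp_bound:
  assumes "finite M"
  shows "\<exists>K\<ge>1. \<forall>A\<in>M. \<forall>v. norm ((A::complex^'d::finite^'d) *v v) \<le> K * norm v"
proof (intro exI[of _ "1 + (\<Sum>A\<in>M. onorm (\<lambda>v. A *v v))"] conjI ballI allI)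
  have nn: "\<And>A. 0 \<le> onorm (\<lambda>v. (A::complex^'d::finite^'d) *v v)"
    by (rule onorm_pos_le[OF mv_blin])
  then show "1 \<le> 1 + (\<Sum>A\<in>M. onorm (\<lambda>v. A *v v))" by (simp add: sum_nonneg)
  fix A v assume A: "A \<in> M"
  have "norm (A *v v) \<le> onorm (\<lambda>v. A *v v) * norm v" by (rule onorm[OF mv_blin])
  also have "onorm (\<lambda>v. A *v v) \<le> 1 + (\<Sum>A\<in>M. onorm (\<lambda>v. A *v v))"
    using member_le_sum[of A M "\<lambda>A. onorm (\<lambda>v. A *v v)"] A assms nn by simp
  then have "onorm (\<lambda>v. A *v v) * norm v \<le> (1 + (\<Sum>A\<in>M. onorm (\<lambda>v. A *v v))) * norm v"
    by (rule mult_right_mono) simp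
  finally show "norm (A *v v) \<le> (1 + (\<Sum>A\<in>M. onorm (\<lambda>v. A *v v))) * norm v" .
qed

lemma cont_mv: "continuous_on S f \<Longrightarrow> continuous_on S (\<lambda>s. (N::complex^'d::finite^'e::finite) *v f s)"
  using continuous_on_compose2[OF linear_continuous_on[OF mv_blin[of N]], of S f] by auto

lemma mgrp_liftctx:
  assumes "mgrp M" shows "liftctx (orel M F)"
  unfolding liftctx_def
proof (intro allI impI)
  fix S f p y
  assume f: "islift (orel M F) S f" and p: "p \<in> S" and y: "orel M F p y"
  obtain B where B: "B \<in> M" "f p = B *v F p" using f p unfolding islift_def orel_def by blast
  obtain A where A: "A \<in> M" "y = A *v F p" using y unfolding orel_def by blast
  obtain Bi where Bi: "Bi \<in> M" "Bi ** B = mat 1" using assms B unfolding mgrp_def by blast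
  let ?g = "\<lambda>s. (A ** Bi) *v f s"
  have "islift (orel M F) S ?g"
    unfolding islift_def
  proof
    show "continuous_on S ?g" using f unfolding islift_def by (intro cont_mv) auto
    show "\<forall>s\<in>S. orel M F s (?g s)"
    proof
      fix s assume s: "s \<in> S"
      then obtain C where C: "C \<in> M" "f s = C *v F s" using f unfolding islift_def orel_def by blast
      have "?g s = (A ** Bi ** C) *v F s" by (simp add: C matrix_vector_mul_assoc)
      moreover have "A ** Bi ** C \<in> M" using A Bi C assms unfolding mgrp_def by blast
      ultimately show "orel M F s (?g s)" unfolding orel_def by blast
    qed
  qed
  moreover have "?g p = y"
    by (simp add: B A matrix_vector_mul_assoc[symmetric] Bi matrix_mul_assoc)
       (simp add: matrix_vector_mul_assoc Bi(2))
  ultimately show "\<exists>g. islift (orel M F) S g \<and> g p = y" by blast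
qed


lemma mgrp_inv_apply:
  assumes "mgrp M" "B \<in> M"
  shows "\<exists>Bi\<in>M. \<forall>v. Bi *v (B *v v) = v"
proof -
  obtain Bi where "Bi \<in> M" "Bi ** B = mat 1" using assms unfolding mgrp_def by blast
  then show ?thesis by (metis matrix_vector_mul_assoc matrix_vector_mul_lid)
qed

lemma mgrp_stab:
  assumes "mgrp M" shows "mgrp {A\<in>M. A *v x = x}"
  unfolding mgrp_def
proof (intro conjI ballI)
  show "finite {A\<in>M. A *v x = x}" using assms unfolding mgrp_def by simp
  show "mat 1 \<in> {A\<in>M. A *v x = x}" using assms unfolding mgrp_def by simp
  fix A assume A: "A \<in> {A\<in>M. A *v x = x}"
  {
    fix B assume B: "B \<in> {A\<in>M. A *v x = x}"
    show "A ** B \<in> {A\<in>M. A *v x = x}"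
      using A B assms unfolding mgrp_def by (simp add: matrix_vector_mul_assoc[symmetric])
  }
  obtain Bi where Bi: "Bi \<in> M" "Bi ** A = mat 1" using assms A unfolding mgrp_def by blast
  have "Bi *v x = x" using A Bi by (metis (mono_tags, lifting) matrix_vector_mul_assoc matrix_vector_mul_lid mem_Collect_eq)
  then show "\<exists>B\<in>{A\<in>M. A *v x = x}. B ** A = mat 1" using Bi by blast
qed

lemma mlift:
  assumes "mgrp M" "is_interval J" "ocont M J F"
  shows "\<exists>f. islift (orel M F) J f"
  using assms
proof (induction "card M" arbitrary: M J F rule: less_induct)
  case less
  note grp = less.prems(1) and J = less.prems(2) and oc = less.prems(3)
  obtain K where K: "K \<ge> 1" "\<And>A v. A \<in> M \<Longrightarrow> norm (A *v v) \<le> K * norm v"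
    using mgrp_bound[of M] grp unfolding mgrp_def by blast
  have dist_le: "dist (A *v u) (A *v v) \<le> K * dist u v" if "A \<in> M" for A u v
    using K(2)[OF that, of "u - v"] by (simp add: dist_norm matrix_vector_mult_diff_distrib)
  have ocD: "\<exists>d>0. \<forall>u\<in>J. dist u t < d \<longrightarrow> (\<exists>A\<in>M. dist (A *v F u) (F t) < e)"
    if "t \<in> J" "e > 0" for t e using oc that unfolding ocont_def by blast
  have one: "mat 1 \<in> M" using grp unfolding mgrp_def by blast
  have mul: "A ** B \<in> M" if "A \<in> M" "B \<in> M" for A B using grp that unfolding mgrp_def by blast
  define Z where "Z = {s\<in>J. \<forall>A\<in>M. A *v F s = F s}"
  define U where "U = J - Z"
  have loc: "\<exists>d>0. \<exists>f. islift (orel M F) (J \<inter> ball s d) f" if sU: "s \<in> U" for s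
  proof -
    define x where "x = F s"
    have sJ: "s \<in> J" using sU unfolding U_def by simp
    obtain A0 where A0: "A0 \<in> M" "A0 *v x \<noteq> x" using sU unfolding U_def Z_def x_def by auto
    define M' where "M' = {A\<in>M. A *v x = x}"
    have grp': "mgrp M'" unfolding M'_def by (rule mgrp_stab[OF grp])
    have lt: "card M' < card M"
    proof (rule psubset_card_mono)
      show "finite M" using grp unfolding mgrp_def by simp
      show "M' \<subset> M" using A0 unfolding M'_def by auto
    qed
    define D where "D = (\<lambda>A. norm (A *v x - x)) ` {A\<in>M. A *v x \<noteq> x}"
    have finD: "finite D" using grp unfolding D_def mgrp_def by simp
    have neD: "D \<noteq> {}" using A0 unfolding D_def by auto
    define dm where "dm = Min D"
    have dmpos: "dm > 0" unfolding dm_def using finD neD by (auto simp: D_def)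
    have dmle: "dm \<le> norm (A *v x - x)" if "A \<in> M" "A *v x \<noteq> x" for A
      unfolding dm_def using finD that by (auto simp: D_def intro!: Min_le)
    define \<epsilon> where "\<epsilon> = dm / (2 * K + 2)"
    have epos: "\<epsilon> > 0" using dmpos K unfolding \<epsilon>_def by simp
    have esmall: "(2 * K + 1) * \<epsilon> < dm"
    proof -
      have "(2 * K + 1) * \<epsilon> < (2 * K + 2) * \<epsilon>" using epos by simp
      also have "\<dots> = dm" unfolding \<epsilon>_def using K by simp
      finally show ?thesis .
    qed
    obtain \<delta> where \<delta>: "\<delta> > 0" "\<forall>u\<in>J. dist u s < \<delta> \<longrightarrow> (\<exists>A\<in>M. dist (A *v F u) x < \<epsilon>)"
      using ocD[OF sJ epos] unfolding x_def by blast
    define J' where "J' = J \<inter> ball s \<delta>"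
    have J': "is_interval J'" unfolding J'_def using J by (simp add: is_interval_Int is_interval_ball_real)
    define Bu where "Bu u = (SOME A. A \<in> M \<and> dist (A *v F u) x < \<epsilon>)" for u
    have Bu: "Bu u \<in> M \<and> dist (Bu u *v F u) x < \<epsilon>" if "u \<in> J'" for u
      unfolding Bu_def by (rule someI_ex) (use \<delta> that in \<open>auto simp: J'_def dist_commute\<close>)
    define F' where "F' u = Bu u *v F u" for u
    have oc': "ocont M' J' F'"
      unfolding ocont_def
    proof (intro ballI allI impI)
      fix t e assume t: "t \<in> J'" and e: "(0::real) < e"
      define e' where "e' = min (e / K) \<epsilon>"
      have e': "e' > 0" using e K epos unfolding e'_def by simp
      have tJ: "t \<in> J" using t unfolding J'_def by simp
      obtain d where d: "d > 0" "\<forall>u\<in>J. dist u t < d \<longrightarrow> (\<exists>A\<in>M. dist (A *v F u) (F t) < e')"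
        using ocD[OF tJ e'] by blast
      show "\<exists>d>0. \<forall>u\<in>J'. dist u t < d \<longrightarrow> (\<exists>A\<in>M'. dist (A *v F' u) (F' t) < e)"
      proof (intro exI[of _ d] conjI ballI impI)
        show "d > 0" by fact
        fix u assume u: "u \<in> J'" and du: "dist u t < d"
        then obtain A where A: "A \<in> M" "dist (A *v F u) (F t) < e'" using d unfolding J'_def by auto
        obtain Bi where Bi: "Bi \<in> M" "\<forall>v. Bi *v (Bu u *v v) = v"
          using mgrp_inv_apply[OF grp] Bu[OF u] by blast
        define C where "C = Bu t ** A ** Bi"
        have CM: "C \<in> M" unfolding C_def using mul A Bi Bu[OF t] by blast
        have CF: "C *v F' u = Bu t *v (A *v F u)"
          unfolding C_def F'_def by (simp add: matrix_vector_mul_assoc[symmetric] Bi(2))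
        have dC: "dist (C *v F' u) (F' t) < K * e'"
        proof -
          have "dist (C *v F' u) (F' t) = dist (Bu t *v (A *v F u)) (Bu t *v F t)"
            by (simp only: CF) (simp add: F'_def)
          also have "\<dots> \<le> K * dist (A *v F u) (F t)"
            using dist_le[OF conjunct1[OF Bu[OF t]]] .
          also have "\<dots> < K * e'" using A K by simp
          finally show ?thesis .
        qed
        have "K * e' \<le> K * (e / K)"
          by (rule mult_left_mono) (use K in \<open>auto simp: e'_def\<close>)
        also have "\<dots> = e" using K by simp
        finally have "K * e' \<le> e" .
        then have dCe: "dist (C *v F' u) (F' t) < e" using dC by simp
        have "C *v x = x"
        proof (rule ccontr)
          assume nx: "C *v x \<noteq> x"
          have "norm (C *v x - x) = dist (C *v x) x" by (simp add: dist_norm)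
          also have "\<dots> \<le> dist (C *v x) (C *v F' u) + dist (C *v F' u) (F' t) + dist (F' t) x"
            using dist_triangle[of "C *v x" x "C *v F' u"] dist_triangle[of "C *v F' u" x "F' t"] by linarith
          also have "\<dots> < K * \<epsilon> + K * \<epsilon> + \<epsilon>"
          proof -
            have "dist (C *v x) (C *v F' u) \<le> K * dist x (F' u)" by (rule dist_le[OF CM])
            also have "\<dots> \<le> K * \<epsilon>" using Bu[OF u] K unfolding F'_def by (simp add: dist_commute)
            finally have 1: "dist (C *v x) (C *v F' u) \<le> K * \<epsilon>" .
            have 2: "dist (C *v F' u) (F' t) < K * \<epsilon>"
            proof -
              have "K * e' \<le> K * \<epsilon>" by (rule mult_left_mono) (use K in \<open>auto simp: e'_def\<close>)
              then show ?thesis using dC by linarith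
            qed
            have 3: "dist (F' t) x < \<epsilon>" using Bu[OF t] unfolding F'_def by simp
            show ?thesis using 1 2 3 by simp
          qed
          also have "\<dots> = (2 * K + 1) * \<epsilon>" by (simp add: algebra_simps)
          finally have "norm (C *v x - x) < dm" using esmall by simp
          then show False using dmle[OF CM nx] by simp
        qed
        then have "C \<in> M'" unfolding M'_def using CM by simp
        then show "\<exists>A\<in>M'. dist (A *v F' u) (F' t) < e" using dCe by blast
      qed
    qed
    obtain f where f: "islift (orel M' F') J' f" using less.hyps[OF lt grp' J' oc'] by blast
    have "islift (orel M F) J' f"
      unfolding islift_def
    proof
      show "continuous_on J' f" using f unfolding islift_def by blast
      show "\<forall>u\<in>J'. orel M F u (f u)"
      proof
        fix u assume u: "u \<in> J'"
        then obtain A where A: "A \<in> M'" "f u = A *v F' u" using f unfolding islift_def orel_def by blast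
        have "f u = (A ** Bu u) *v F u" using A unfolding F'_def by (simp add: matrix_vector_mul_assoc)
        moreover have "A ** Bu u \<in> M" using A Bu[OF u] mul unfolding M'_def by blast
        ultimately show "orel M F u (f u)" unfolding orel_def by blast
      qed
    qed
    then show ?thesis using \<delta> unfolding J'_def by blast
  qed
  have nbh: "\<exists>d>0. J \<inter> ball s d \<subseteq> U" if sU: "s \<in> U" for s
  proof -
    define x where "x = F s"
    have sJ: "s \<in> J" using sU unfolding U_def by simp
    obtain A0 where A0: "A0 \<in> M" "A0 *v x \<noteq> x" using sU unfolding U_def Z_def x_def by auto
    define a where "a = norm (A0 *v x - x)"
    have apos: "a > 0" using A0 unfolding a_def by simp
    define \<epsilon> where "\<epsilon> = a / (2 * K + 2)"
    have epos: "\<epsilon> > 0" using apos K unfolding \<epsilon>_def by simp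
    have esmall: "(K + 1) * \<epsilon> < a"
    proof -
      have "(K + 1) * \<epsilon> < (2 * K + 2) * \<epsilon>" using epos K by simp
      also have "\<dots> = a" unfolding \<epsilon>_def using K by simp
      finally show ?thesis .
    qed
    obtain \<delta> where \<delta>: "\<delta> > 0" "\<forall>u\<in>J. dist u s < \<delta> \<longrightarrow> (\<exists>A\<in>M. dist (A *v F u) x < \<epsilon>)"
      using ocD[OF sJ epos] unfolding x_def by blast
    have "J \<inter> ball s \<delta> \<subseteq> U"
    proof
      fix u assume u: "u \<in> J \<inter> ball s \<delta>"
      then obtain B where B: "B \<in> M" "dist (B *v F u) x < \<epsilon>" using \<delta> by (auto simp: dist_commute)
      show "u \<in> U"
      proof (rule ccontr)
        assume "u \<notin> U"
        then have fix_u: "\<forall>A\<in>M. A *v F u = F u" using u unfolding U_def Z_def by auto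
        then have du: "dist (F u) x < \<epsilon>" using B by simp
        have "a = dist (A0 *v x) x" unfolding a_def by (simp add: dist_norm)
        also have "\<dots> \<le> dist (A0 *v x) (A0 *v F u) + dist (A0 *v F u) x" by (rule dist_triangle)
        also have "\<dots> = dist (A0 *v x) (A0 *v F u) + dist (F u) x" using fix_u A0 by simp
        also have "\<dots> \<le> K * dist x (F u) + dist (F u) x" using dist_le[OF A0(1)] by simp
        also have "\<dots> = (K + 1) * dist (F u) x" by (simp add: dist_commute algebra_simps)
        also have "\<dots> \<le> (K + 1) * \<epsilon>" using du K by (intro mult_left_mono) auto
        finally show False using esmall by simp
      qed
    qed
    then show ?thesis using \<delta> by blast
  qed
  have ctx: "liftctx (orel M F)" by (rule mgrp_liftctx[OF grp])
  have comp: "\<exists>f. islift (orel M F) (connected_component_set U s) f" if sU: "s \<in> U" for s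
  proof (rule global_lift[OF ctx])
    show "is_interval (connected_component_set U s)"
      by (simp add: is_interval_connected_1)
    fix u assume u: "u \<in> connected_component_set U s"
    then have uU: "u \<in> U" using connected_component_subset by blast
    obtain d f where d: "d > 0" "islift (orel M F) (J \<inter> ball u d) f" using loc[OF uU] by blast
    have "connected_component_set U s \<inter> ball u d \<subseteq> J \<inter> ball u d"
      using connected_component_subset[of U s] unfolding U_def by blast
    then show "\<exists>d>0. \<exists>f. islift (orel M F) (connected_component_set U s \<inter> ball u d) f"
      using d islift_subset by blast
  qed
  define lc where "lc C = (SOME f. islift (orel M F) C f)" for C
  have lc: "islift (orel M F) (connected_component_set U s) (lc (connected_component_set U s))"
    if "s \<in> U" for s
    unfolding lc_def using comp[OF that] by (rule someI_ex)
  define cb where "cb s = (if s \<in> Z then F s else lc (connected_component_set U s) s)" for s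
  have cbrel: "orel M F s (cb s)" if sJ: "s \<in> J" for s
  proof (cases "s \<in> Z")
    case True then show ?thesis unfolding cb_def orel_def using one by (auto intro!: bexI[of _ "mat 1"])
  next
    case False
    then have sU: "s \<in> U" using sJ unfolding U_def by simp
    have "s \<in> connected_component_set U s" using sU by simp
    then show ?thesis using lc[OF sU] False unfolding cb_def islift_def by auto
  qed
  have "continuous_on J cb"
    unfolding continuous_on_iff
  proof (intro ballI allI impI)
    fix s e assume sJ: "s \<in> J" and e: "(0::real) < e"
    show "\<exists>d>0. \<forall>x'\<in>J. dist x' s < d \<longrightarrow> dist (cb x') (cb s) < e"
    proof (cases "s \<in> Z")
      case False
      then have sU: "s \<in> U" using sJ unfolding U_def by simp
      define C where "C = connected_component_set U s"
      obtain d where d: "d > 0" "J \<inter> ball s d \<subseteq> U" using nbh[OF sU] by blast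
      have sub: "J \<inter> ball s d \<subseteq> C"
        unfolding C_def
      proof (rule connected_component_maximal)
        show "s \<in> J \<inter> ball s d" using sJ d by simp
        show "connected (J \<inter> ball s d)"
          using J by (simp add: is_interval_connected is_interval_Int is_interval_ball_real)
        show "J \<inter> ball s d \<subseteq> U" by fact
      qed
      have cbC: "cb u = lc C u" if "u \<in> C" for u
      proof -
        have uU: "u \<in> U" using that connected_component_subset unfolding C_def by blast
        then have "u \<notin> Z" unfolding U_def by simp
        moreover have "connected_component_set U u = C"
          using that unfolding C_def by (metis connected_component_eq)
        ultimately show ?thesis unfolding cb_def by simp
      qed
      have sC: "s \<in> C" unfolding C_def using sU by simp
      have "continuous_on C (lc C)" using lc[OF sU] unfolding C_def islift_def by blast
      then obtain d' where d': "d' > 0" "\<forall>x'\<in>C. dist x' s < d' \<longrightarrow> dist (lc C x') (lc C s) < e"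
        using sC e unfolding continuous_on_iff by blast
      show ?thesis
      proof (intro exI[of _ "min d d'"] conjI ballI impI)
        show "min d d' > 0" using d d' by simp
        fix x' assume x': "x' \<in> J" "dist x' s < min d d'"
        then have "x' \<in> C" using sub by (auto simp: dist_commute)
        then show "dist (cb x') (cb s) < e" using d' x' cbC sC by auto
      qed
    next
      case True
      define x where "x = F s"
      have fixx: "\<forall>A\<in>M. A *v x = x" using True unfolding Z_def x_def by simp
      have cbs: "cb s = x" using True unfolding cb_def x_def by simp
      have eK: "e / K > 0" using e K by simp
      obtain d where d: "d > 0" "\<forall>u\<in>J. dist u s < d \<longrightarrow> (\<exists>A\<in>M. dist (A *v F u) (F s) < e / K)"
        using ocD[OF sJ eK] by blast
      show ?thesis
      proof (intro exI[of _ d] conjI ballI impI)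
        show "d > 0" by fact
        fix u assume u: "u \<in> J" "dist u s < d"
        then obtain B where B: "B \<in> M" "dist (B *v F u) x < e / K" using d unfolding x_def by blast
        obtain A where A: "A \<in> M" "cb u = A *v F u" using cbrel[OF u(1)] unfolding orel_def by blast
        obtain Bi where Bi: "Bi \<in> M" "\<forall>v. Bi *v (B *v v) = v" using mgrp_inv_apply[OF grp B(1)] by blast
        have ABi: "A ** Bi \<in> M" using mul A Bi by blast
        have "cb u = (A ** Bi) *v (B *v F u)" using A Bi by (simp add: matrix_vector_mul_assoc[symmetric])
        moreover have "x = (A ** Bi) *v x" using fixx ABi by simp
        ultimately have "dist (cb u) (cb s) = dist ((A ** Bi) *v (B *v F u)) ((A ** Bi) *v x)"
          using cbs by simp
        also have "\<dots> \<le> K * dist (B *v F u) x" by (rule dist_le[OF ABi])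
        also have "\<dots> < K * (e / K)" using B(2) K(1) by (intro mult_strict_left_mono) auto
        also have "\<dots> = e" using K by simp
        finally show "dist (cb u) (cb s) < e" .
      qed
    qed
  qed
  then show ?case using cbrel unfolding islift_def by blast
qed




locale setting =
  fixes Gr :: "('g, 'b) monoid_scheme"
    and \<rho> :: "'g \<Rightarrow> complex^'d::finite^'d"
    and \<sigma> :: "complex^'d \<Rightarrow> complex^'n::finite"
  assumes la: "linear_action Gr \<rho>"
    and fin: "finite (carrier Gr)"
    and hg: "hom_generators Gr \<rho> \<sigma>"
begin

definition "MM = \<rho> ` carrier Gr"

lemma grp: "group Gr" using la by (simp add: linear_action_def)

lemma mgrp_MM: "mgrp MM"
  unfolding mgrp_def MM_def
proof (intro conjI ballI)
  show "finite (\<rho> ` carrier Gr)" using fin by simp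
  show "mat 1 \<in> \<rho> ` carrier Gr"
    using la grp group.is_monoid monoid.one_closed unfolding linear_action_def by (metis imageI)
  fix A assume "A \<in> \<rho> ` carrier Gr"
  then obtain g where g: "g \<in> carrier Gr" "A = \<rho> g" by blast
  {
    fix B assume "B \<in> \<rho> ` carrier Gr"
    then obtain h where h: "h \<in> carrier Gr" "B = \<rho> h" by blast
    have "A ** B = \<rho> (g \<otimes>\<^bsub>Gr\<^esub> h)" using la g h unfolding linear_action_def by simp
    then show "A ** B \<in> \<rho> ` carrier Gr" using g h grp group.is_monoid monoid.m_closed by fast
  }
  have "\<rho> (inv\<^bsub>Gr\<^esub> g) ** A = mat 1"
    using la g grp unfolding linear_action_def by (metis group.inv_closed group.l_inv)
  then show "\<exists>B\<in>\<rho> ` carrier Gr. B ** A = mat 1" using g grp group.inv_closed by fast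
qed

lemma sepM: "\<sigma> x = \<sigma> y \<Longrightarrow> \<exists>A\<in>MM. x = A *v y"
  using separation[OF la fin hg] unfolding MM_def by blast

lemma sigma_invM: "A \<in> MM \<Longrightarrow> \<sigma> (A *v v) = \<sigma> v"
  unfolding MM_def using sigma_inv[OF hg] by blast

lemma comp_poly: "poly_fun (\<lambda>x. \<sigma> x $ j)"
  using hg unfolding hom_generators_def invariant_poly_def by blast

lemma sigma_cont: "continuous_on UNIV \<sigma>"
proof -
  have "continuous_on UNIV (\<lambda>x. \<chi> j. \<sigma> x $ j)"
    by (intro continuous_on_vec_lambda poly_fun_cont comp_poly)
  then show ?thesis by simp
qed

definition "dg j = (SOME k. homog_poly_fun k (\<lambda>x. \<sigma> x $ j))"

lemma dg: "homog_poly_fun (dg j) (\<lambda>x. \<sigma> x $ j)"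
  unfolding dg_def using hg unfolding hom_generators_def by (metis someI_ex)

lemma scale_sigma: "\<sigma> (scaleR r x) $ j = of_real r ^ dg j * \<sigma> x $ j"
  using homog_scale[OF dg] by simp

definition "Psi z = (\<Sum>j\<in>{j. dg j \<ge> 1}. root (dg j) (cmod (z $ j)))"

lemma Psi_nonneg: "Psi z \<ge> 0"
  unfolding Psi_def by (intro sum_nonneg real_root_ge_zero) auto

lemma Psi_cont: "continuous_on UNIV Psi"
  unfolding Psi_def by (intro continuous_intros)

lemma Psi_scale: assumes "r \<ge> 0" shows "Psi (\<sigma> (scaleR r x)) = r * Psi (\<sigma> x)"
proof -
  have "root (dg j) (cmod (\<sigma> (scaleR r x) $ j)) = r * root (dg j) (cmod (\<sigma> x $ j))"
    if "dg j \<ge> 1" for j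
  proof -
    have "cmod (\<sigma> (scaleR r x) $ j) = r ^ dg j * cmod (\<sigma> x $ j)"
      using assms by (simp add: scale_sigma norm_mult norm_power)
    then show ?thesis using that assms by (simp add: real_root_mult real_root_power_cancel)
  qed
  then show ?thesis unfolding Psi_def by (simp add: sum_distrib_left)
qed

lemma proper: "\<exists>m>0. \<forall>y. m * norm y \<le> Psi (\<sigma> y)"
proof -
  have cont: "continuous_on (sphere 0 1) (\<lambda>u. Psi (\<sigma> u))"
    using continuous_on_compose2[OF Psi_cont sigma_cont] by (auto intro: continuous_on_subset)
  have ne: "sphere (0::complex^'d) 1 \<noteq> {}"
  proof -
    obtain v :: "complex^'d" where "v \<noteq> 0" using zero_neq_one by (metis vec_eq_iff zero_index one_index)
    then have "(1 / norm v) *\<^sub>R v \<in> sphere 0 1" by simp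
    then show ?thesis by blast
  qed
  obtain u0 where u0: "u0 \<in> sphere 0 1" "\<forall>u\<in>sphere 0 1. Psi (\<sigma> u0) \<le> Psi (\<sigma> u)"
    using continuous_attains_inf[OF compact_sphere ne cont] by blast
  define m where "m = Psi (\<sigma> u0)"
  have mpos: "m > 0"
  proof (rule ccontr)
    assume "\<not> m > 0"
    then have m0: "Psi (\<sigma> u0) = 0" using Psi_nonneg[of "\<sigma> u0"] unfolding m_def by linarith
    have z: "root (dg j) (cmod (\<sigma> u0 $ j)) = 0" if "dg j \<ge> 1" for j
      using m0 that unfolding Psi_def
      by (subst (asm) sum_nonneg_eq_0_iff) (auto intro: real_root_ge_zero)
    have "\<sigma> u0 $ j = \<sigma> 0 $ j" for j
    proof (cases "dg j \<ge> 1")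
      case True
      then have "cmod (\<sigma> u0 $ j) = 0" using z[OF True] by simp
      moreover have "\<sigma> 0 $ j = 0"
        using scale_sigma[of 0 0 j] True by (simp add: zero_power)
      ultimately show ?thesis by simp
    next
      case False
      then have "dg j = 0" by simp
      then show ?thesis using scale_sigma[of 0 u0 j] by simp
    qed
    then have "\<sigma> u0 = \<sigma> 0" by (simp add: vec_eq_iff)
    from sepM[OF this] obtain A :: "complex^'d^'d" where "u0 = A *v 0" by blast
    then have "u0 = 0" by (simp add: matrix_vector_mult_0_right)
    then show False using u0 by simp
  qed
  have "m * norm y \<le> Psi (\<sigma> y)" for y
  proof (cases "y = 0")
    case True then show ?thesis using Psi_nonneg by simp
  next
    case False
    define u where "u = (1 / norm y) *\<^sub>R y"
    have u: "u \<in> sphere 0 1" using False unfolding u_def by simp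
    have y: "y = norm y *\<^sub>R u" using False unfolding u_def by simp
    have "Psi (\<sigma> y) = norm y * Psi (\<sigma> u)" by (subst y, rule Psi_scale) simp
    moreover have "m \<le> Psi (\<sigma> u)" using u0 u unfolding m_def by blast
    moreover have "m * norm y \<le> Psi (\<sigma> u) * norm y"
      using \<open>m \<le> Psi (\<sigma> u)\<close> by (rule mult_right_mono) simp
    ultimately show ?thesis by (simp add: mult.commute)
  qed
  then show ?thesis using mpos by blast
qed


lemma unif_sep:
  fixes x0 :: "complex^'d" and R :: real
  assumes e: "e > 0"
  shows "\<exists>\<eta>>0. \<forall>y. norm y \<le> R \<longrightarrow> dist (\<sigma> y) (\<sigma> x0) < \<eta> \<longrightarrow> (\<exists>A\<in>MM. dist (A *v y) x0 < e)"
proof -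
  define KK where "KK = cball 0 R \<inter> (\<Inter>A\<in>MM. {y. e \<le> dist (A *v y) x0})"
  show ?thesis
  proof (cases "KK = {}")
    case True
    show ?thesis
    proof (intro exI[of _ 1] conjI allI impI)
      fix y :: "complex^'d" assume y: "norm y \<le> R"
      show "\<exists>A\<in>MM. dist (A *v y) x0 < e"
      proof (rule ccontr)
        assume "\<not> ?thesis"
        then have "y \<in> KK" using y unfolding KK_def by (auto simp: not_less)
        then show False using True by simp
      qed
    qed simp
  next
    case False
    have cl: "closed {y. e \<le> dist (A *v y) x0}" for A :: "complex^'d^'d"
    proof -
      have "continuous_on UNIV (\<lambda>y. dist (A *v y) x0)"
        by (intro continuous_intros linear_continuous_on[OF mv_blin])
      then show ?thesis using closed_Collect_le[of "\<lambda>_. e" "\<lambda>y. dist (A *v y) x0"] by (simp add: continuous_on_const)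
    qed
    have comp: "compact KK" unfolding KK_def
      by (intro compact_Int_closed compact_cball closed_INT) (use cl in auto)
    have cont: "continuous_on KK (\<lambda>y. dist (\<sigma> y) (\<sigma> x0))"
      using continuous_on_subset[OF sigma_cont] by (intro continuous_intros) auto
    obtain y0 where y0: "y0 \<in> KK" "\<forall>y\<in>KK. dist (\<sigma> y0) (\<sigma> x0) \<le> dist (\<sigma> y) (\<sigma> x0)"
      using continuous_attains_inf[OF comp False cont] by blast
    have pos: "dist (\<sigma> y0) (\<sigma> x0) > 0"
    proof (rule ccontr)
      assume "\<not> ?thesis"
      then have "\<sigma> x0 = \<sigma> y0" by simp
      from sepM[OF this] obtain A :: "complex^'d^'d" where A: "A \<in> MM" "x0 = A *v y0" by blast
      then have "dist (A *v y0) x0 = 0" by simp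
      moreover have "e \<le> dist (A *v y0) x0" using y0(1) A(1) unfolding KK_def by blast
      ultimately show False using e by simp
    qed
    show ?thesis
    proof (intro exI[of _ "dist (\<sigma> y0) (\<sigma> x0)"] conjI allI impI pos)
      fix y :: "complex^'d" assume y: "norm y \<le> R" "dist (\<sigma> y) (\<sigma> x0) < dist (\<sigma> y0) (\<sigma> x0)"
      show "\<exists>A\<in>MM. dist (A *v y) x0 < e"
      proof (rule ccontr)
        assume "\<not> ?thesis"
        then have "y \<in> KK" using y unfolding KK_def by (auto simp: not_less)
        then show False using y0(2) y(2) by force
      qed
    qed
  qed
qed

lemma lift_main:
  fixes I :: "real set" and c :: "real \<Rightarrow> complex^'n"
  assumes I: "is_interval I" and c: "continuous_on I c" and cI: "c ` I \<subseteq> range \<sigma>"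
  shows "\<exists>cbar :: real \<Rightarrow> complex^'d. continuous_on I cbar \<and> (\<forall>t\<in>I. \<sigma> (cbar t) = c t)"
proof -
  define F where "F t = (SOME x. \<sigma> x = c t)" for t
  have F: "\<sigma> (F t) = c t" if "t \<in> I" for t
  proof -
    have "c t \<in> range \<sigma>" using cI that by blast
    then obtain x where "\<sigma> x = c t" by (metis rangeE)
    then show ?thesis unfolding F_def by (rule someI)
  qed
  obtain m where m: "m > 0" "\<And>y. m * norm y \<le> Psi (\<sigma> y)" using proper by blast
  have oc: "ocont MM I F"
    unfolding ocont_def
  proof (intro ballI allI impI)
    fix t e assume t: "t \<in> I" and e: "(0::real) < e"
    define R where "R = Psi (c t) / m + 1"
    obtain \<eta> where \<eta>: "\<eta> > 0" "\<forall>y. norm y \<le> R \<longrightarrow> dist (\<sigma> y) (\<sigma> (F t)) < \<eta> \<longrightarrow> (\<exists>A\<in>MM. dist (A *v y) (F t) < e)"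
      using unif_sep[OF e] by blast
    have pc: "continuous_on I (\<lambda>s. Psi (c s))"
      using continuous_on_compose2[OF Psi_cont c] by auto
    obtain d1 where d1: "d1 > 0" "\<forall>s\<in>I. dist s t < d1 \<longrightarrow> dist (Psi (c s)) (Psi (c t)) < m"
      using pc[unfolded continuous_on_iff, rule_format, OF t m(1)] by blast
    obtain d2 where d2: "d2 > 0" "\<forall>s\<in>I. dist s t < d2 \<longrightarrow> dist (c s) (c t) < \<eta>"
      using c[unfolded continuous_on_iff, rule_format, OF t \<eta>(1)] by blast
    show "\<exists>d>0. \<forall>s\<in>I. dist s t < d \<longrightarrow> (\<exists>A\<in>MM. dist (A *v F s) (F t) < e)"
    proof (intro exI[of _ "min d1 d2"] conjI ballI impI)
      show "min d1 d2 > 0" using d1 d2 by simp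
      fix s assume s: "s \<in> I" "dist s t < min d1 d2"
      have "Psi (c s) < Psi (c t) + m" using d1 s by (auto simp: dist_real_def)
      moreover have "m * norm (F s) \<le> Psi (c s)" using m(2)[of "F s"] F[OF s(1)] by simp
      ultimately have "m * norm (F s) \<le> m * R" unfolding R_def using m(1) by (simp add: algebra_simps)
      then have "norm (F s) \<le> R" using m(1) by simp
      moreover have "dist (\<sigma> (F s)) (\<sigma> (F t)) < \<eta>" using d2 s F[OF s(1)] F[OF t] by auto
      ultimately show "\<exists>A\<in>MM. dist (A *v F s) (F t) < e" using \<eta>(2) by blast
    qed
  qed
  obtain f where f: "islift (orel MM F) I f" using mlift[OF mgrp_MM I oc] by blast
  show ?thesis
  proof (intro exI[of _ f] conjI ballI)
    show "continuous_on I f" using f unfolding islift_def by blast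
    fix t assume t: "t \<in> I"
    then obtain A where "A \<in> MM" "f t = A *v F t" using f unfolding islift_def orel_def by blast
    then show "\<sigma> (f t) = c t" using sigma_invM F[OF t] by simp
  qed
qed

end

theorem theorem5p1:
  fixes Gr :: "('g, 'b) monoid_scheme"
    and \<rho> :: "'g \<Rightarrow> complex^'d::finite^'d"
    and \<sigma> :: "complex^'d \<Rightarrow> complex^'n::finite"
    and I :: "real set"
    and c :: "real \<Rightarrow> complex^'n"
  assumes "linear_action Gr \<rho>"
    and "finite (carrier Gr)"
    and "hom_generators Gr \<rho> \<sigma>"
    and "is_interval I"
    and "continuous_on I c"
    and "c ` I \<subseteq> range \<sigma>"
  shows "\<exists>cbar :: real \<Rightarrow> complex^'d. continuous_on I cbar \<and> (\<forall>t\<in>I. \<sigma> (cbar t) = c t)"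
proof -
  interpret setting Gr \<rho> \<sigma> using assms(1-3) by unfold_locales
  show ?thesis using lift_main assms(4-6) by blast
qed



end
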